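(* Let $n\ge3$, $\ell>0$, $\alpha\ge(n-2)\ell$, $S=\alpha I_n+\ell\mathbf{1}_n\mathbf{1}_n^\top$, and let $P\ne0$ be a real symmetric diagonally dominant $n\times n$ matrix with nonnegative entries. Define $f(t)=\|(S+tP)^{-1}\|_\infty$ for $t\ge0$. Then $f$ is differentiable at $t=0$ (as a one-sided derivative) and $f'(0)<0$.
   Context: For a real matrix $P$, $\Delta_i(P)=|P_{ii}|-\sum_{j\ne i}|P_{ij}|$; $P$ is diagonally dominant if $\Delta_i(P)\ge0$ for all $i$. $\|A\|_\infty$ is the maximum absolute row sum. *)

theory Defs
  imports "HOL-Analysis.Analysis"
begin

definition Delta :: "real^'n^'n \<Rightarrow> 'n \<Rightarrow> real" where
  "Delta P i = \<bar>P $ i $ i\<bar> - (\<Sum>j\<in>UNIV - {i}. \<bar>P $ i $ j\<bar>)"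

definition diag_dominant :: "real^'n^'n \<Rightarrow> bool" where
  "diag_dominant P \<longleftrightarrow> (\<forall>i. Delta P i \<ge> 0)"

definition norm_inf :: "real^'n^'n \<Rightarrow> real" where
  "norm_inf A = Max (range (\<lambda>i. \<Sum>j\<in>UNIV. \<bar>A $ i $ j\<bar>))"

end

theory Submission
  imports Defs
begin

definition N1 :: "real^'n^'n \<Rightarrow> real" where "N1 X = (\<Sum>i\<in>UNIV. \<Sum>j\<in>UNIV. \<bar>X$i$j\<bar>)"

lemma N1_nonneg: "N1 X \<ge> 0" unfolding N1_def by (intro sum_nonneg) auto

lemma row_le_N1: "(\<Sum>j\<in>UNIV. \<bar>X$i$j\<bar>) \<le> N1 X"
  unfolding N1_def by (rule member_le_sum[where f="\<lambda>i. \<Sum>j\<in>UNIV. \<bar>X$i$j\<bar>"]) (auto intro: sum_nonneg)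

lemma entry_le_N1: "\<bar>X$i$j\<bar> \<le> N1 X"
proof -
  have "\<bar>X$i$j\<bar> \<le> (\<Sum>j\<in>UNIV. \<bar>X$i$j\<bar>)" by (rule member_le_sum) auto
  also have "\<dots> \<le> N1 X" by (rule row_le_N1)
  finally show ?thesis .
qed

lemma N1_mult: "N1 (X ** Y) \<le> N1 X * N1 Y"
proof -
  have "N1 (X ** Y) = (\<Sum>i\<in>UNIV. \<Sum>j\<in>UNIV. \<bar>\<Sum>k\<in>UNIV. X$i$k * Y$k$j\<bar>)"
    by (simp add: N1_def matrix_matrix_mult_def)
  also have "\<dots> \<le> (\<Sum>i\<in>UNIV. \<Sum>j\<in>UNIV. \<Sum>k\<in>UNIV. \<bar>X$i$k\<bar> * \<bar>Y$k$j\<bar>)"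
    by (intro sum_mono order.trans[OF sum_abs]) (simp add: abs_mult)
  also have "\<dots> = (\<Sum>i\<in>UNIV. \<Sum>k\<in>UNIV. \<bar>X$i$k\<bar> * (\<Sum>j\<in>UNIV. \<bar>Y$k$j\<bar>))"
    by (rule sum.cong[OF refl], subst sum.swap, simp add: sum_distrib_left)
  also have "\<dots> \<le> (\<Sum>i\<in>UNIV. \<Sum>k\<in>UNIV. \<bar>X$i$k\<bar> * N1 Y)"
    by (intro sum_mono mult_left_mono row_le_N1) auto
  also have "\<dots> = N1 X * N1 Y" by (simp add: N1_def sum_distrib_right)
  finally show ?thesis .
qed

lemma N1_add: "N1 (X + Y) \<le> N1 X + N1 Y"
  unfolding N1_def by (simp add: sum.distrib[symmetric] abs_triangle_ineq sum_mono)

lemma N1_scale: "N1 (c *\<^sub>R X) = \<bar>c\<bar> * N1 X"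
  unfolding N1_def by (simp add: abs_mult sum_distrib_left)

lemma matrix_add_rdistrib': "((A::real^'n^'n) + B) ** C = A ** C + B ** C"
  by (vector matrix_matrix_mult_def sum.distrib[symmetric] field_simps)

lemma sum_if_eq: "(\<Sum>j\<in>(UNIV::'n::finite set). if i = j then x else y) = x + (real CARD('n) - 1) * y"
proof -
  have "(\<Sum>j\<in>(UNIV::'n set). if i = j then x else y) = (\<Sum>j\<in>(UNIV::'n set). y + (if i = j then x - y else 0))"
    by (intro sum.cong) auto
  also have "\<dots> = real CARD('n) * y + (x - y)" by (simp add: sum.distrib)
  finally show ?thesis by (simp add: algebra_simps)
qed

lemma sum_sigma: "(\<Sum>j\<in>(UNIV::'n::finite set). (if i = j then 1 else -1) * (y j::real)) = 2 * y i - sum y UNIV"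
proof -
  have "(\<Sum>j\<in>(UNIV::'n set). (if i = j then 1 else -1) * y j) = (\<Sum>j\<in>UNIV. 2 * (if i = j then y j else 0) - y j)"
    by (intro sum.cong) auto
  also have "\<dots> = 2 * y i - sum y UNIV" by (simp add: sum_subtractf sum_distrib_left[symmetric])
  finally show ?thesis .
qed

definition Amat :: "real \<Rightarrow> real \<Rightarrow> real^'n^'n" where
  "Amat a b = (\<chi> i j. (if i = j then a else 0) - b)"

lemma Amat_left: "(Amat a b ** X) $ i $ j = a * X$i$j - b * (\<Sum>m\<in>UNIV. X$m$j)"
proof -
  have "(Amat a b ** X) $ i $ j = (\<Sum>k\<in>UNIV. (if i = k then a * X$k$j else 0) - b * X$k$j)"
    by (simp add: Amat_def matrix_matrix_mult_def) (intro sum.cong, auto simp: algebra_simps)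
  thus ?thesis by (simp add: sum_subtractf sum_distrib_left)
qed

lemma Amat_right: "(X ** Amat a b) $ i $ j = a * X$i$j - b * (\<Sum>k\<in>UNIV. X$i$k)"
proof -
  have "(X ** Amat a b) $ i $ j = (\<Sum>k\<in>UNIV. (if k = j then a * X$i$k else 0) - b * X$i$k)"
    by (simp add: Amat_def matrix_matrix_mult_def) (intro sum.cong, auto simp: algebra_simps)
  thus ?thesis by (simp add: sum_subtractf sum_distrib_left mult.commute)
qed

lemma small_vec_zero:
  fixes x :: "real^'n" and C :: "real^'n^'n"
  assumes t: "t \<ge> 0" "t * N1 C \<le> 1/2" and h: "\<And>i. x$i = - (t * (C *v x)$i)"
  shows "x = 0"
proof -
  define m where "m = Max (range (\<lambda>k. \<bar>x$k\<bar>))"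
  have xm: "\<bar>x$k\<bar> \<le> m" for k unfolding m_def by (rule Max_ge) auto
  have "\<bar>x$i\<bar> \<le> m / 2" for i
  proof -
    have "\<bar>x$i\<bar> = t * \<bar>\<Sum>k\<in>UNIV. C$i$k * x$k\<bar>" using h[of i] t
      by (simp add: matrix_vector_mult_def abs_mult)
    also have "\<dots> \<le> t * (\<Sum>k\<in>UNIV. \<bar>C$i$k\<bar> * m)"
      using t by (intro mult_left_mono order.trans[OF sum_abs] sum_mono)
        (auto simp: abs_mult intro!: mult_left_mono xm)
    also have "\<dots> = (t * (\<Sum>k\<in>UNIV. \<bar>C$i$k\<bar>)) * m" by (simp add: sum_distrib_right)
    also have "\<dots> \<le> (t * N1 C) * m"
      using t xm[of i] by (intro mult_right_mono mult_left_mono row_le_N1) auto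
    also have "\<dots> \<le> (1/2) * m" using t xm[of i] by (intro mult_right_mono) auto
    finally show ?thesis by simp
  qed
  moreover have "m \<in> range (\<lambda>k. \<bar>x$k\<bar>)" unfolding m_def by (rule Max_in) auto
  then obtain k where "m = \<bar>x$k\<bar>" by auto
  ultimately have "m \<le> 0" by (metis field_sum_of_halves abs_ge_zero add_le_same_cancel1 order_trans)
  then have "x$k = 0" for k using xm[of k] by linarith
  then show ?thesis by (simp add: vec_eq_iff)
qed
lemma deriv_from_bound:
  fixes f :: "real \<Rightarrow> real"
  assumes d: "\<delta> > 0" and K: "K \<ge> 0"
    and b: "\<And>t. 0 \<le> t \<Longrightarrow> t \<le> \<delta> \<Longrightarrow> \<bar>f t - (c + t * D)\<bar> \<le> K * t\<^sup>2"
  shows "(f has_real_derivative D) (at 0 within {0..})"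
proof -
  have f0: "f 0 = c" using b[of 0] d by simp
  show ?thesis unfolding has_field_derivative_iff Lim_within
  proof (intro allI impI)
    fix e :: real assume e: "e > 0"
    define d' where "d' = min \<delta> (e / (K + 1))"
    have d'p: "d' > 0" using d e K by (simp add: d'_def)
    show "\<exists>d>0. \<forall>x\<in>{0..}. 0 < dist x 0 \<and> dist x 0 < d \<longrightarrow> dist ((f x - f 0) / (x - 0)) D < e"
    proof (intro exI[of _ d'] conjI ballI impI d'p)
      fix x :: real assume x: "x \<in> {0..}" "0 < dist x 0 \<and> dist x 0 < d'"
      then have x0: "x > 0" and xd: "x < d'" by auto
      have "\<bar>f x - (c + x * D)\<bar> \<le> K * x\<^sup>2" using b[of x] x0 xd by (simp add: d'_def)
      then have "\<bar>(f x - c) / x - D\<bar> \<le> K * x"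
        using x0 by (simp add: power2_eq_square field_simps abs_div_pos[symmetric] abs_le_iff)
      also have "K * x \<le> K * (e / (K+1))" using xd K by (intro mult_left_mono) (auto simp: d'_def)
      also have "\<dots> < e" using K e by (simp add: field_simps)
      finally show "dist ((f x - f 0) / (x - 0)) D < e" by (simp add: f0 dist_real_def)
    qed
  qed
qed

lemma key_ineq:
  fixes \<alpha> l N d r s :: real
  assumes "\<alpha> > 0" "l > 0" "N \<ge> 3" "0 \<le> r" "r \<le> d" "d + 2*r \<le> s" "0 < s"
  shows "0 < 2*(\<alpha>+N*l)^2*d - (4*l+\<alpha>)*(\<alpha>+N*l)*(d+r) + l*(2*l+\<alpha>)* s"
proof -
  define L where "L = \<alpha> + N*l"
  define cd where "cd = 2*L^2 - (4*l+\<alpha>)*L + l*(2*l+\<alpha>)"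
  define cr where "cr = -(4*l+\<alpha>)*L + 2*l*(2*l+\<alpha>)"
  have eq: "2*(\<alpha>+N*l)^2*d - (4*l+\<alpha>)*(\<alpha>+N*l)*(d+r) + l*(2*l+\<alpha>)* s
     = (d - r)*cd + r*(cd + cr) + l*(2*l+\<alpha>)*(s - d - 2*r)"
    unfolding cd_def cr_def L_def by (simp add: algebra_simps power2_eq_square)
  have cd_eq: "cd = \<alpha>^2 + (3*N-3)*\<alpha>*l + 2*(N-1)^2*l^2"
    unfolding cd_def L_def by (simp add: algebra_simps power2_eq_square)
  have cdp: "cd > 0" unfolding cd_eq using assms by (intro add_pos_nonneg add_pos_nonneg) auto
  have ccr: "cd + cr = (2*N-5)*\<alpha>*l + 2*(N-1)*(N-3)*l^2"
    unfolding cd_def cr_def L_def by (simp add: algebra_simps power2_eq_square)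
  have ccrp: "cd + cr > 0" unfolding ccr using assms
    by (intro add_pos_nonneg) (auto intro!: mult_pos_pos mult_nonneg_nonneg)
  have t3: "l*(2*l+\<alpha>)*(s - d - 2*r) \<ge> 0" using assms by auto
  show ?thesis
  proof (cases "d > 0")
    case True
    have "(d - r)*cd + r*(cd + cr) > 0"
    proof (cases "r > 0")
      case True thus ?thesis using cdp ccrp assms by (intro add_nonneg_pos) auto
    next
      case False thus ?thesis using cdp \<open>d>0\<close> assms by auto
    qed
    thus ?thesis unfolding eq using t3 by linarith
  next
    case False
    then have "d = 0" "r = 0" using assms by auto
    thus ?thesis using assms by simp
  qed
qed

lemma mat1_scale_mv: "((mat 1 + t *\<^sub>R C) *v x) $ i = x$i + t * (C *v x)$i"
  for C :: "real^'n^'n"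
  by (simp add: matrix_vector_mult_add_rdistrib scaleR_matrix_vector_assoc[symmetric])

lemma aux_cancel: "x > 0 \<Longrightarrow> (y::real) > 0 \<Longrightarrow> l / (x * y) * y = l / x"
  by simp

theorem proposition5p1:
  fixes P :: "real^'n^'n" and l \<alpha> :: real
  assumes "CARD('n) \<ge> 3"
    and "l > 0"
    and "\<alpha> \<ge> (real CARD('n) - 2) * l"
    and "P \<noteq> 0"
    and "transpose P = P"
    and "diag_dominant P"
    and "\<forall>i j. P $ i $ j \<ge> 0"
  shows "let S = (\<alpha> *\<^sub>R mat 1 + (\<chi> i j. l) :: real^'n^'n);
             f = (\<lambda>t::real. norm_inf (matrix_inv (S + t *\<^sub>R P)))
         in \<exists>D. (f has_real_derivative D) (at 0 within {0..}) \<and> D < 0"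
proof -
  note n3 = assms(1) and lpos = assms(2) and alph = assms(3) and Pnz = assms(4)
    and Psym = assms(5) and Pdd = assms(6) and Pnn = assms(7)
  define N where "N = real CARD('n)"
  have N3: "N \<ge> 3" using n3 unfolding N_def by simp
  have apos: "\<alpha> > 0"
  proof -
    have "(N - 2) * l \<ge> 1 * l" using N3 lpos by (intro mult_right_mono) auto
    thus ?thesis using alph lpos unfolding N_def by linarith
  qed
  define S where "S = (\<alpha> *\<^sub>R mat 1 + (\<chi> i j. l) :: real^'n^'n)"
  define f where "f = (\<lambda>t::real. norm_inf (matrix_inv (S + t *\<^sub>R P)))"
  define a where "a = 1 / \<alpha>"
  define b where "b = l / (\<alpha> * (\<alpha> + N * l))"
  define A :: "real^'n^'n" where "A = Amat a b"
  have Lpos: "\<alpha> + N * l > 0" using apos lpos N3 by (simp add: add_pos_nonneg)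
  have den1: "\<alpha> * (\<alpha> + N * l) > 0" using apos Lpos by simp
  have den2: "\<alpha> * \<alpha> + N * (\<alpha> * l) > 0" using den1 by (simp add: algebra_simps)
  have bpos: "b > 0" unfolding b_def using apos lpos Lpos by simp
  have abpos: "a - b > 0"
  proof -
    have lt: "l / (\<alpha> + N * l) < 1"
    proof -
      have "(N - 1) * l \<ge> 0" using N3 lpos by simp
      then have "l < \<alpha> + N * l" using apos by (simp add: algebra_simps)
      thus ?thesis using Lpos by simp
    qed
    have "b = a * (l / (\<alpha> + N * l))" unfolding a_def b_def by simp
    then have "a - b = a * (1 - l / (\<alpha> + N * l))" by (simp add: algebra_simps)
    moreover have "a > 0" unfolding a_def using apos by simp
    ultimately show ?thesis using lt by simp
  qed
  have Sent: "S $ i $ j = (if i = j then \<alpha> else 0) + l" for i j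
    by (simp add: S_def mat_def)
  have AS: "A ** S = mat 1"
  proof -
    have colS: "(\<Sum>m\<in>UNIV. S $ m $ j) = \<alpha> + N * l" for j
      by (simp add: Sent sum.distrib N_def)
    have "(A ** S) $ i $ j = (mat 1 :: real^'n^'n) $ i $ j" for i j
    proof -
      have "(A ** S) $ i $ j = a * ((if i = j then \<alpha> else 0) + l) - b * (\<alpha> + N * l)"
        unfolding A_def Amat_left colS by (simp only: Sent)
      also have "\<dots> = (if i = j then 1 else 0)"
      proof -
        have hb: "b * (\<alpha> + N * l) = l / \<alpha>" unfolding b_def using apos Lpos by (rule aux_cancel)
        show ?thesis unfolding hb using apos by (cases "i = j") (simp_all add: a_def field_simps)
      qed
      finally show ?thesis by (simp add: mat_def)
    qed
    thus ?thesis by (simp add: vec_eq_iff)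
  qed
  define C where "C = A ** P"
  define B where "B = C ** A"
  define K1 where "K1 = N1 C"
  define G where "G = (\<lambda>t. matrix_inv (S + t *\<^sub>R P))"
  define m0 where "m0 = min (a - b) b"
  have m0pos: "m0 > 0" using abpos bpos by (simp add: m0_def)
  define \<delta> where "\<delta> = min (1 / (2 * (K1 + 1))) (m0 / (N1 B + 1))"
  have K1nn: "K1 \<ge> 0" unfolding K1_def by (rule N1_nonneg)
  have N1Bnn: "N1 B \<ge> 0" by (rule N1_nonneg)
  have \<delta>pos: "\<delta> > 0" unfolding \<delta>_def using K1nn N1Bnn m0pos by simp
  define K2 where "K2 = K1 * K1 * (2 * N1 A)"
  have K2nn: "K2 \<ge> 0" unfolding K2_def using K1nn N1_nonneg[of A] by simp
  have Aent: "A $ i $ j = (if i = j then a else 0) - b" for i j by (simp add: A_def Amat_def)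
  define \<sigma> :: "'n \<Rightarrow> 'n \<Rightarrow> real" where "\<sigma> i j = (if i = j then 1 else -1)" for i j
  define \<rho> where "\<rho> = (a - b) + (N - 1) * b"
  define r where "r i = (\<Sum>j\<in>UNIV. \<sigma> i j * B $ i $ j)" for i
  have rho_eq: "(\<Sum>j\<in>UNIV. \<bar>A $ i $ j\<bar>) = \<rho>" for i
  proof -
    have "(\<Sum>j\<in>UNIV. \<bar>A $ i $ j\<bar>) = (\<Sum>j\<in>UNIV. if i = j then a - b else b)"
      using abpos bpos by (intro sum.cong) (auto simp: Aent)
    thus ?thesis unfolding sum_if_eq \<rho>_def N_def .
  qed
  have est: "\<bar>(\<Sum>j\<in>UNIV. \<bar>G t $ i $ j\<bar>) - (\<rho> - t * r i)\<bar> \<le> (N * K2) * t\<^sup>2"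
    if t0: "0 \<le> t" and td: "t \<le> \<delta>" for t i
  proof -
    have tK1: "t * K1 \<le> 1/2"
    proof -
      have "t * K1 \<le> (1 / (2 * (K1 + 1))) * K1"
        using td t0 K1nn by (intro mult_right_mono) (auto simp: \<delta>_def)
      also have "\<dots> \<le> 1/2" using K1nn by (simp add: field_simps)
      finally show ?thesis .
    qed
    define M where "M = S + t *\<^sub>R P"
    have AM: "A ** M = mat 1 + t *\<^sub>R C"
      unfolding M_def C_def by (simp add: matrix_add_ldistrib matrix_scalar_ac AS scalar_matrix_assoc)
    have inj: "\<forall>x. M *v x = 0 \<longrightarrow> x = 0"
    proof (intro allI impI)
      fix x assume "M *v x = 0"
      then have "(A ** M) *v x = 0" by (metis matrix_vector_mul_assoc matrix_vector_mult_0_right)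
      then have "x$i = - (t * (C *v x)$i)" for i
        unfolding AM using mat1_scale_mv[of t C x i] by (simp add: vec_eq_iff) 
      then show "x = 0" using small_vec_zero[of t C x] t0 tK1 unfolding K1_def by auto
    qed
    have "invertible M"
      unfolding invertible_left_inverse matrix_left_invertible_ker using inj by blast
    then have MG: "M ** G t = mat 1 \<and> G t ** M = mat 1"
      unfolding G_def M_def[symmetric] invertible_def matrix_inv_def by (rule someI_ex)
    have GA: "G t = A + (-t) *\<^sub>R (C ** G t)"
    proof -
      have "A = A ** (M ** G t)" using MG by simp
      also have "\<dots> = (mat 1 + t *\<^sub>R C) ** G t" by (simp add: matrix_mul_assoc AM)
      also have "\<dots> = G t + t *\<^sub>R (C ** G t)"
        by (simp add: matrix_add_rdistrib' scalar_matrix_assoc)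
      finally show ?thesis by simp
    qed
    have N1G: "N1 (G t) \<le> 2 * N1 A"
    proof -
      have "N1 (G t) \<le> N1 A + N1 ((-t) *\<^sub>R (C ** G t))" using GA N1_add by metis
      also have "\<dots> = N1 A + t * N1 (C ** G t)" using t0 N1_scale[of "-t" "C ** G t"] by simp
      also have "\<dots> \<le> N1 A + t * (K1 * N1 (G t))"
        using t0 N1_mult[of C "G t"] unfolding K1_def by (intro add_left_mono mult_left_mono) auto
      also have "\<dots> = N1 A + (t * K1) * N1 (G t)" by simp
      also have "\<dots> \<le> N1 A + (1/2) * N1 (G t)"
        using tK1 N1_nonneg[of "G t"] by (intro add_left_mono mult_right_mono) auto
      finally show ?thesis by simp
    qed
    have CG: "C ** G t = B + (-t) *\<^sub>R (C ** (C ** G t))"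
    proof -
      have "C ** G t = C ** (A + (-t) *\<^sub>R (C ** G t))" using GA by metis
      also have "\<dots> = C ** A + C ** ((-t) *\<^sub>R (C ** G t))" by (rule matrix_add_ldistrib)
      also have "C ** ((-t) *\<^sub>R (C ** G t)) = (-t) *\<^sub>R (C ** (C ** G t))"
        by (rule trans[OF matrix_scalar_ac scalar_matrix_assoc[symmetric]])
      also have "C ** A = B" unfolding B_def ..
      finally show ?thesis .
    qed
    define E where "E = C ** (C ** G t)"
    have N1E: "N1 E \<le> K2"
    proof -
      have "N1 E \<le> K1 * N1 (C ** G t)" unfolding E_def K1_def by (rule N1_mult)
      also have "\<dots> \<le> K1 * (K1 * N1 (G t))"
        using K1nn N1_mult[of C "G t"] unfolding K1_def by (intro mult_left_mono) auto
      also have "\<dots> \<le> K1 * (K1 * (2 * N1 A))"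
        using K1nn N1G by (intro mult_left_mono) auto
      finally show ?thesis unfolding K2_def by simp
    qed
    have Gent: "G t $ i $ j = (A $ i $ j - t * B $ i $ j) + t\<^sup>2 * E $ i $ j" for j
    proof -
      have "G t $ i $ j = A $ i $ j - t * (C ** G t) $ i $ j"
        using arg_cong[OF GA, of "\<lambda>X. X $ i $ j"] by simp
      also have "(C ** G t) $ i $ j = B $ i $ j - t * E $ i $ j"
        using arg_cong[OF CG, of "\<lambda>X. X $ i $ j"] unfolding E_def by simp
      finally show ?thesis by (simp add: power2_eq_square algebra_simps)
    qed
    have sign: "\<bar>A $ i $ j - t * B $ i $ j\<bar> = \<bar>A $ i $ j\<bar> - t * (\<sigma> i j * B $ i $ j)" for j
    proof -
      have "t * \<bar>B $ i $ j\<bar> \<le> (m0 / (N1 B + 1)) * N1 B"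
        using t0 td entry_le_N1[of B i j] N1Bnn by (intro mult_mono) (auto simp: \<delta>_def)
      also have "\<dots> \<le> m0" using m0pos N1Bnn by (simp add: field_simps)
      finally have tb: "t * \<bar>B $ i $ j\<bar> \<le> m0" .
      have tb2: "\<bar>t * B $ i $ j\<bar> \<le> m0" using tb t0 by (simp add: abs_mult)
      show ?thesis
      proof (cases "i = j")
        case True
        then have "A $ i $ j = a - b" "a - b \<ge> m0" by (auto simp: Aent m0_def)
        then have nn: "A $ i $ j - t * B $ i $ j \<ge> 0" "A $ i $ j \<ge> 0" using tb2 m0pos
          unfolding abs_le_iff by linarith+
        then show ?thesis using True by (simp add: \<sigma>_def)
      next
        case False
        then have "A $ i $ j = - b" "b \<ge> m0" by (auto simp: Aent m0_def)
        then have np: "A $ i $ j - t * B $ i $ j \<le> 0" "A $ i $ j \<le> 0" using tb2 m0pos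
          unfolding abs_le_iff by linarith+
        then show ?thesis using False by (simp add: \<sigma>_def abs_of_nonpos)
      qed
    qed
    have lin: "(\<Sum>j\<in>UNIV. \<bar>A $ i $ j - t * B $ i $ j\<bar>) = \<rho> - t * r i"
      by (simp add: sign sum_subtractf rho_eq r_def sum_distrib_left)
    have "\<bar>(\<Sum>j\<in>UNIV. \<bar>G t $ i $ j\<bar>) - (\<Sum>j\<in>UNIV. \<bar>A $ i $ j - t * B $ i $ j\<bar>)\<bar>
        \<le> (\<Sum>j\<in>UNIV. \<bar>\<bar>G t $ i $ j\<bar> - \<bar>A $ i $ j - t * B $ i $ j\<bar>\<bar>)"
      unfolding sum_subtractf[symmetric] by (rule sum_abs)
    also have "\<dots> \<le> (\<Sum>j\<in>(UNIV::'n set). t\<^sup>2 * K2)"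
    proof (intro sum_mono)
      fix j
      have "\<bar>\<bar>G t $ i $ j\<bar> - \<bar>A $ i $ j - t * B $ i $ j\<bar>\<bar> \<le> \<bar>G t $ i $ j - (A $ i $ j - t * B $ i $ j)\<bar>"
        by (rule abs_triangle_ineq3)
      also have "\<dots> = t\<^sup>2 * \<bar>E $ i $ j\<bar>" by (simp add: Gent abs_mult)
      also have "\<dots> \<le> t\<^sup>2 * K2"
        using entry_le_N1[of E i j] N1E by (intro mult_left_mono) auto
      finally show "\<bar>\<bar>G t $ i $ j\<bar> - \<bar>A $ i $ j - t * B $ i $ j\<bar>\<bar> \<le> t\<^sup>2 * K2" .
    qed
    also have "\<dots> = (N * K2) * t\<^sup>2" by (simp add: N_def)
    finally show ?thesis unfolding lin .
  qed
  have Psym': "P $ m $ k = P $ k $ m" for m k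
    using arg_cong[OF Psym, of "\<lambda>X. X $ k $ m"] by (simp add: transpose_def)
  define p where "p i = (\<Sum>k\<in>UNIV. P $ i $ k)" for i
  define off where "off i = (\<Sum>k\<in>UNIV - {i}. P $ i $ k)" for i
  define ss where "ss = (\<Sum>k\<in>UNIV. p k)"
  have col_eq: "(\<Sum>m\<in>UNIV. P $ m $ k) = p k" for k unfolding p_def by (simp add: Psym')
  have p_split: "p i = P $ i $ i + off i" for i
    unfolding p_def off_def by (rule sum.remove) auto
  have off_le: "off i \<le> P $ i $ i" for i
    using Pdd Pnn unfolding diag_dominant_def Delta_def off_def by auto
  have off_nn: "off i \<ge> 0" for i unfolding off_def using Pnn by (auto intro: sum_nonneg)
  have p_nn: "p i \<ge> 0" for i unfolding p_def using Pnn by (auto intro: sum_nonneg)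
  have ss_ge: "ss \<ge> P $ i $ i + 2 * off i" for i
  proof -
    have e: "ss = p i + (\<Sum>k\<in>UNIV - {i}. p k)" unfolding ss_def by (rule sum.remove) auto
    have m: "(\<Sum>k\<in>UNIV - {i}. p k) \<ge> (\<Sum>k\<in>UNIV - {i}. P $ i $ k)"
    proof (intro sum_mono)
      fix k
      have "P $ k $ i \<le> (\<Sum>m\<in>UNIV. P $ k $ m)" using Pnn by (intro member_le_sum) auto
      then show "P $ i $ k \<le> p k" unfolding p_def using Psym'[of i k] by simp
    qed
    show ?thesis using e m p_split[of i] unfolding off_def by linarith
  qed
  have ss_pos: "ss > 0"
  proof -
    obtain i j where ij: "P $ i $ j \<noteq> 0" using Pnz by (metis vec_eq_iff zero_index)
    have h1: "P $ i $ j \<le> p i" unfolding p_def using Pnn by (intro member_le_sum) auto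
    have h2: "p i \<le> ss" unfolding ss_def using p_nn by (intro member_le_sum) auto
    have h3: "P $ i $ j \<ge> 0" using Pnn by blast
    show ?thesis using h1 h2 h3 ij by linarith
  qed
  have r_pos: "r i > 0" for i
  proof -
    have Cent: "C $ i' $ j = a * P $ i' $ j - b * p j" for i' j
      unfolding C_def A_def Amat_left col_eq ..
    have xrow: "(\<Sum>k\<in>UNIV. C $ i $ k) = a * p i - b * ss"
      unfolding Cent by (simp add: sum_subtractf sum_distrib_left p_def ss_def)
    have Bent: "B $ i $ j = a * C $ i $ j - b * (a * p i - b * ss)" for j
      unfolding B_def A_def Amat_right xrow ..
    have rB: "r i = 2 * B $ i $ i - (\<Sum>j\<in>UNIV. B $ i $ j)"
      unfolding r_def \<sigma>_def by (rule sum_sigma)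
    have sumB: "(\<Sum>j\<in>UNIV. B $ i $ j) = a * (a * p i - b * ss) - N * b * (a * p i - b * ss)"
      unfolding Bent by (simp add: sum_subtractf sum_distrib_left[symmetric] xrow N_def)
    define d where "d = P $ i $ i"
    define rr where "rr = off i"
    have r_expr: "r i = 2 * (a * (a * d - b * (d + rr)) - b * (a * (d + rr) - b * ss))
        - (a - N * b) * (a * (d + rr) - b * ss)"
      unfolding rB sumB Bent Cent d_def rr_def p_split[of i, symmetric] by (simp add: algebra_simps)
    define L where "L = \<alpha> + N * l"
    have Q: "0 < 2*L^2*d - (4*l+\<alpha>)*L*(d+rr) + l*(2*l+\<alpha>) * ss"
      unfolding L_def using key_ineq[of \<alpha> l N rr d ss] apos lpos N3 off_nn[of i] off_le[of i] ss_ge[of i] ss_pos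
      unfolding d_def rr_def by simp
    have LposL: "L > 0" unfolding L_def using Lpos .
    have bL: "b = l / (\<alpha> * L)" unfolding b_def L_def ..
    have hab: "a - N * b = 1 / L"
    proof -
      have "a - N * b = (L - N * l) / (\<alpha> * L)" unfolding a_def bL using apos LposL
        by (simp add: field_simps)
      also have "L - N * l = \<alpha>" unfolding L_def by simp
      finally show ?thesis using apos by simp
    qed
    have "r i = (2*L^2*d - (4*l+\<alpha>)*L*(d+rr) + l*(2*l+\<alpha>) * ss) / (\<alpha> * L)^2"
      unfolding r_expr hab unfolding a_def bL using apos LposL
      by (simp add: field_simps power2_eq_square)
    also have "\<dots> > 0" using Q apos Lpos unfolding L_def by simp
    finally show ?thesis .
  qed
  define D where "D = Max (range (\<lambda>i. - r i))"
  have Dneg: "D < 0"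
  proof -
    have "D \<in> range (\<lambda>i. - r i)" unfolding D_def by (rule Max_in) auto
    thus ?thesis using r_pos by auto
  qed
  have fbound: "\<bar>f t - (\<rho> + t * D)\<bar> \<le> (N * K2) * t\<^sup>2" if t0: "0 \<le> t" and td: "t \<le> \<delta>" for t
  proof -
    have fG: "f t = Max (range (\<lambda>i. \<Sum>j\<in>UNIV. \<bar>G t $ i $ j\<bar>))"
      unfolding f_def G_def norm_inf_def ..
    have up: "f t \<le> \<rho> + t * D + (N * K2) * t\<^sup>2"
      unfolding fG
    proof (rule Max.boundedI)
      show "finite (range (\<lambda>i. \<Sum>j\<in>UNIV. \<bar>G t $ i $ j\<bar>))" by simp
      show "range (\<lambda>i. \<Sum>j\<in>UNIV. \<bar>G t $ i $ j\<bar>) \<noteq> {}" by simp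
      fix y assume "y \<in> range (\<lambda>i. \<Sum>j\<in>UNIV. \<bar>G t $ i $ j\<bar>)"
      then obtain i where yi: "y = (\<Sum>j\<in>UNIV. \<bar>G t $ i $ j\<bar>)" by auto
      have "- r i \<le> D" unfolding D_def by (rule Max_ge) auto
      then have "t * (- r i) \<le> t * D" using t0 by (rule mult_left_mono)
      then show "y \<le> \<rho> + t * D + (N * K2) * t\<^sup>2" using est[OF t0 td, of i] yi by (simp add: abs_le_iff)
    qed
    have "D \<in> range (\<lambda>i. - r i)" unfolding D_def by (rule Max_in) auto
    then obtain i0 where i0: "D = - r i0" by auto
    have "(\<Sum>j\<in>UNIV. \<bar>G t $ i0 $ j\<bar>) \<le> f t" unfolding fG by (rule Max_ge) auto
    then have lo: "\<rho> + t * D - (N * K2) * t\<^sup>2 \<le> f t" using est[OF t0 td, of i0] i0 by (simp add: abs_le_iff)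
    show ?thesis using up lo by (simp add: abs_le_iff)
  qed
  have NK: "N * K2 \<ge> 0" using K2nn N3 by simp
  have "(f has_real_derivative D) (at 0 within {0..})"
    by (rule deriv_from_bound[OF \<delta>pos NK fbound]) auto
  then show ?thesis using Dneg unfolding Let_def S_def[symmetric] f_def[symmetric] by blast
qed

end
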